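(* Let $A: E\supseteq D(A)\to E$ be a densely defined, closed, real linear operator on a complex Banach lattice $E$. Let $u\in E_+$ and let $\varphi\in E'$ be strictly positive. If there exists a real $\mu_0\in\rho(A)$ with $-u\otimes\varphi\preceq R(\mu_0,A)\preceq u\otimes\varphi$, then $-u\otimes\varphi\preceq R(\mu,A)^n\preceq u\otimes\varphi$ for all real $\mu\in\rho(A)$ and all $n\in\mathbb{N}$.
   Context: A linear operator $A$ is real if $D(A) = (D(A)\cap E_{\mathbb{R}}) + i(D(A)\cap E_{\mathbb{R}})$ and $A$ maps $D(A)\cap E_{\mathbb{R}}$ into $E_{\mathbb{R}}$, where $E_{\mathbb{R}}$ is the real part of $E$. $R(\mu,A)=(\mu-A)^{-1}$. $\varphi$ strictly positive: $\langle\varphi,f\rangle>0$ for all $0\ne f\in E_+$. $u\otimes\varphi$ is $f\mapsto\langle\varphi,f\rangle u$. For bounded real operators, $T\succeq S$ (equivalently $S\preceq T$) means $T-cS$ maps $E_+$ into $E_+$ for some $c>0$. *)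

theory Defs
  imports "HOL-Analysis.Analysis"
begin

definition lat_abs :: "'a::{lattice, uminus} \<Rightarrow> 'a" where
  "lat_abs x = sup x (- x)"

class real_banach_lattice = banach + ordered_real_vector + lattice +
  assumes lattice_norm: "sup x (- x) \<le> sup y (- y) \<Longrightarrow> norm x \<le> norm y"

text \<open>An (unbounded) linear operator is given by a domain D and a map A
  (only its values on D matter).\<close>

definition lin_op :: "'a::real_vector set \<Rightarrow> ('a \<Rightarrow> 'a) \<Rightarrow> bool" where
  "lin_op D A \<longleftrightarrow> subspace D \<and>
     (\<forall>x\<in>D. \<forall>y\<in>D. A (x + y) = A x + A y) \<and>
     (\<forall>x\<in>D. \<forall>c. A (c *\<^sub>R x) = c *\<^sub>R A x)"

definition densely_defined :: "'a::real_normed_vector set \<Rightarrow> bool" where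
  "densely_defined D \<longleftrightarrow> closure D = UNIV"

definition closed_op :: "'a::real_normed_vector set \<Rightarrow> ('a \<Rightarrow> 'a) \<Rightarrow> bool" where
  "closed_op D A \<longleftrightarrow> closed {(x, A x) | x. x \<in> D}"

definition resolvent :: "'a::real_vector set \<Rightarrow> ('a \<Rightarrow> 'a) \<Rightarrow> real \<Rightarrow> 'a \<Rightarrow> 'a" where
  "resolvent D A \<mu> y = (THE x. x \<in> D \<and> \<mu> *\<^sub>R x - A x = y)"

definition in_resolvent_set :: "'a::real_normed_vector set \<Rightarrow> ('a \<Rightarrow> 'a) \<Rightarrow> real \<Rightarrow> bool" where
  "in_resolvent_set D A \<mu> \<longleftrightarrow>
     (\<forall>y. \<exists>!x. x \<in> D \<and> \<mu> *\<^sub>R x - A x = y) \<and> bounded_linear (resolvent D A \<mu>)"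

definition strictly_positive :: "('a::ordered_real_vector \<Rightarrow> real) \<Rightarrow> bool" where
  "strictly_positive \<phi> \<longleftrightarrow> (\<forall>f. 0 \<le> f \<and> f \<noteq> 0 \<longrightarrow> \<phi> f > 0)"

definition rank_one :: "'a::real_vector \<Rightarrow> ('a \<Rightarrow> real) \<Rightarrow> 'a \<Rightarrow> 'a" where
  "rank_one u \<phi> f = \<phi> f *\<^sub>R u"

text \<open>dominates T S  (T \<succeq> S, i.e. S \<preceq> T): T - c S maps E_+ into E_+ for some c > 0.\<close>

definition dominates :: "('a::ordered_real_vector \<Rightarrow> 'a) \<Rightarrow> ('a \<Rightarrow> 'a) \<Rightarrow> bool" where
  "dominates T S \<longleftrightarrow> (\<exists>c>0. \<forall>f. 0 \<le> f \<longrightarrow> 0 \<le> T f - c *\<^sub>R S f)"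

end

theory Submission imports Defs "HOL-Library.Lattice_Algebras" begin

subclass (in real_banach_lattice) lattice_ab_group_add ..

definition bnd :: "'a::real_banach_lattice \<Rightarrow> 'a \<Rightarrow> real \<Rightarrow> bool" where
  "bnd u x t \<longleftrightarrow> - (t *\<^sub>R u) \<le> x \<and> x \<le> t *\<^sub>R u"

lemma bnd_add: "bnd u x s \<Longrightarrow> bnd u y t \<Longrightarrow> bnd u (x + y) (s + t)"
proof -
  assume a: "bnd u x s" "bnd u y t"
  have "- (s *\<^sub>R u) + - (t *\<^sub>R u) \<le> x + y" "x + y \<le> s *\<^sub>R u + t *\<^sub>R u"
    using a unfolding bnd_def by (meson add_mono)+
  then show ?thesis unfolding bnd_def by (simp add: scaleR_add_left add.commute)
qed

lemma bnd_neg: "bnd u (- x) s \<longleftrightarrow> bnd u x s"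
  unfolding bnd_def by (auto simp: neg_le_iff_le minus_le_iff le_minus_iff)

lemma bnd_scale_nonneg: "0 \<le> c \<Longrightarrow> bnd u x s \<Longrightarrow> bnd u (c *\<^sub>R x) (c * s)"
proof -
  assume c: "0 \<le> c" and b: "bnd u x s"
  have "c *\<^sub>R (- (s *\<^sub>R u)) \<le> c *\<^sub>R x" using b c unfolding bnd_def by (intro scaleR_left_mono) auto
  moreover have "c *\<^sub>R x \<le> c *\<^sub>R (s *\<^sub>R u)"
    using b c unfolding bnd_def by (intro scaleR_left_mono) auto
  ultimately show ?thesis unfolding bnd_def by (simp add: scaleR_scaleR)
qed

lemma bnd_scale: "bnd u x s \<Longrightarrow> bnd u (c *\<^sub>R x) (\<bar>c\<bar> * s)"
proof (cases "0 \<le> c")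
  case True
  assume "bnd u x s" then show ?thesis using bnd_scale_nonneg[OF True] True by simp
next
  case False
  assume b: "bnd u x s"
  have "bnd u ((-c) *\<^sub>R x) ((-c) * s)" using False b by (intro bnd_scale_nonneg) auto
  then have "bnd u (- (c *\<^sub>R x)) (\<bar>c\<bar> * s)" using False by simp
  then show ?thesis using bnd_neg by blast
qed

lemma bnd_mono: "0 \<le> u \<Longrightarrow> s \<le> t \<Longrightarrow> bnd u x s \<Longrightarrow> bnd u x t"
proof -
  assume u: "0 \<le> u" and st: "s \<le> t" and b: "bnd u x s"
  have "s *\<^sub>R u \<le> t *\<^sub>R u" using u st by (simp add: scaleR_right_mono)
  then show ?thesis using b unfolding bnd_def by (meson neg_le_iff_le order_trans)
qed

lemma bnd_norm: "0 \<le> t \<Longrightarrow> bnd u x t \<Longrightarrow> norm x \<le> t * norm u"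
proof -
  assume t: "0 \<le> t" and b: "bnd u x t"
  have "sup x (- x) \<le> t *\<^sub>R u" using b unfolding bnd_def by (simp add: minus_le_iff)
  also have "\<dots> \<le> sup (t *\<^sub>R u) (- (t *\<^sub>R u))" by simp
  finally have "norm x \<le> norm (t *\<^sub>R u)" by (rule lattice_norm)
  then show ?thesis using t by simp
qed

lemma abs_nonneg_lat: "0 \<le> sup (h::'a::real_banach_lattice) (- h)"
proof -
  let ?s = "sup h (- h)"
  have "h \<le> ?s" "- h \<le> ?s" by simp_all
  then have "h + - h \<le> ?s + ?s" by (rule add_mono)
  then have "0 \<le> (2::real) *\<^sub>R ?s" by (simp add: scaleR_2)
  then have "(1/2::real) *\<^sub>R 0 \<le> (1/2::real) *\<^sub>R ((2::real) *\<^sub>R ?s)" by (intro scaleR_left_mono) auto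
  then show ?thesis by simp
qed

lemma pos_norm_le: "0 \<le> p \<Longrightarrow> p \<le> sup h (- h) \<Longrightarrow> norm (p::'a::real_banach_lattice) \<le> norm h"
proof -
  assume p: "0 \<le> p" "p \<le> sup h (- h)"
  have "- p \<le> p" using p(1) by (meson neg_le_0_iff_le order_trans)
  then have "sup p (- p) = p" by (simp add: sup_absorb1)
  then show ?thesis using p(2) by (metis lattice_norm)
qed

lemma res_props:
  assumes "in_resolvent_set D A \<mu>"
  shows "resolvent D A \<mu> y \<in> D \<and> \<mu> *\<^sub>R resolvent D A \<mu> y - A (resolvent D A \<mu> y) = y"
proof -
  have "\<exists>!x. x \<in> D \<and> \<mu> *\<^sub>R x - A x = y" using assms(1) unfolding in_resolvent_set_def by blast
  then show ?thesis unfolding resolvent_def by (rule theI')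
qed

lemma res_unique:
  assumes "in_resolvent_set D A \<mu>" "x \<in> D" "\<mu> *\<^sub>R x - A x = y"
  shows "resolvent D A \<mu> y = x"
proof -
  have "\<exists>!x. x \<in> D \<and> \<mu> *\<^sub>R x - A x = y" using assms(1) unfolding in_resolvent_set_def by blast
  then show ?thesis unfolding resolvent_def by (rule the1_equality) (use assms in blast)
qed

lemma res_id1:
  assumes r0: "in_resolvent_set D A \<mu>0" and r: "in_resolvent_set D A \<mu>"
  shows "resolvent D A \<mu> y = resolvent D A \<mu>0 y + (\<mu>0 - \<mu>) *\<^sub>R resolvent D A \<mu>0 (resolvent D A \<mu> y)"
proof -
  let ?x = "resolvent D A \<mu> y"
  have lin0: "bounded_linear (resolvent D A \<mu>0)" using r0 unfolding in_resolvent_set_def by blast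
  then have lin: "linear (resolvent D A \<mu>0)" by (rule bounded_linear.linear)
  have x: "?x \<in> D" "\<mu> *\<^sub>R ?x - A ?x = y" using res_props[OF r] by auto
  have "\<mu>0 *\<^sub>R ?x - A ?x = (\<mu> *\<^sub>R ?x - A ?x) + (\<mu>0 - \<mu>) *\<^sub>R ?x"
    by (simp add: algebra_simps)
  then have "\<mu>0 *\<^sub>R ?x - A ?x = y + (\<mu>0 - \<mu>) *\<^sub>R ?x" using x(2) by simp
  then have "resolvent D A \<mu>0 (y + (\<mu>0 - \<mu>) *\<^sub>R ?x) = ?x" using res_unique[OF r0 x(1)] by blast
  then show ?thesis by (simp add: linear_add[OF lin] linear_scale[OF lin])
qed

lemma res_id2:
  assumes r0: "in_resolvent_set D A \<mu>0" and r: "in_resolvent_set D A \<mu>"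
  shows "resolvent D A \<mu> y = resolvent D A \<mu>0 y + (\<mu>0 - \<mu>) *\<^sub>R resolvent D A \<mu> (resolvent D A \<mu>0 y)"
proof -
  let ?x = "resolvent D A \<mu>0 y"
  have lin0: "bounded_linear (resolvent D A \<mu>)" using r unfolding in_resolvent_set_def by blast
  then have lin: "linear (resolvent D A \<mu>)" by (rule bounded_linear.linear)
  have x: "?x \<in> D" "\<mu>0 *\<^sub>R ?x - A ?x = y" using res_props[OF r0] by auto
  have "\<mu> *\<^sub>R ?x - A ?x = (\<mu>0 *\<^sub>R ?x - A ?x) + (\<mu> - \<mu>0) *\<^sub>R ?x"
    by (simp add: algebra_simps)
  then have "\<mu> *\<^sub>R ?x - A ?x = y + (\<mu> - \<mu>0) *\<^sub>R ?x" using x(2) by simp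
  then have e: "resolvent D A \<mu> (y + (\<mu> - \<mu>0) *\<^sub>R ?x) = ?x" using res_unique[OF r x(1)] by blast
  have "resolvent D A \<mu> (y + (\<mu> - \<mu>0) *\<^sub>R ?x) = resolvent D A \<mu> y + (\<mu> - \<mu>0) *\<^sub>R resolvent D A \<mu> ?x"
    by (simp add: linear_add[OF lin] linear_scale[OF lin])
  then have "?x = resolvent D A \<mu> y + (\<mu> - \<mu>0) *\<^sub>R resolvent D A \<mu> ?x" using e by simp
  then show ?thesis by (simp add: algebra_simps)
qed

lemma res_id3:
  assumes r0: "in_resolvent_set D A \<mu>0" and r: "in_resolvent_set D A \<mu>"
  shows "resolvent D A \<mu> y = resolvent D A \<mu>0 y + (\<mu>0 - \<mu>) *\<^sub>R resolvent D A \<mu>0 (resolvent D A \<mu>0 y)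
     + ((\<mu>0 - \<mu>) * (\<mu>0 - \<mu>)) *\<^sub>R resolvent D A \<mu>0 (resolvent D A \<mu> (resolvent D A \<mu>0 y))"
proof -
  have lin0: "bounded_linear (resolvent D A \<mu>0)" using r0 unfolding in_resolvent_set_def by blast
  then have lin: "linear (resolvent D A \<mu>0)" by (rule bounded_linear.linear)
  let ?Q = "resolvent D A \<mu>0" and ?R = "resolvent D A \<mu>" and ?d = "\<mu>0 - \<mu>"
  have "?Q (?R y) = ?Q (?Q y + ?d *\<^sub>R ?R (?Q y))" using res_id2[OF r0 r, of y] by simp
  also have "\<dots> = ?Q (?Q y) + ?d *\<^sub>R ?Q (?R (?Q y))"
    by (simp add: linear_add[OF lin] linear_scale[OF lin])
  finally have e: "?Q (?R y) = ?Q (?Q y) + ?d *\<^sub>R ?Q (?R (?Q y))" .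
  have "?R y = ?Q y + ?d *\<^sub>R ?Q (?R y)" by (rule res_id1[OF r0 r])
  also have "\<dots> = ?Q y + ?d *\<^sub>R (?Q (?Q y) + ?d *\<^sub>R ?Q (?R (?Q y)))" by (simp only: e)
  also have "\<dots> = ?Q y + ?d *\<^sub>R ?Q (?Q y) + (?d * ?d) *\<^sub>R ?Q (?R (?Q y))"
    by (simp only: scaleR_add_right scaleR_scaleR add.assoc)
  finally show ?thesis .
qed

locale posctx =
  fixes u :: "'a::real_banach_lattice" and \<phi> :: "'a \<Rightarrow> real"
  assumes u: "0 \<le> u" and phil: "bounded_linear \<phi>" and phip: "strictly_positive \<phi>"
begin

lemma phi_mono: "f \<le> g \<Longrightarrow> \<phi> f \<le> \<phi> g"
proof -
  assume fg: "f \<le> g"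
  have "\<phi> g - \<phi> f = \<phi> (g - f)" by (simp add: linear_diff[OF bounded_linear.linear[OF phil]])
  moreover have "0 \<le> \<phi> (g - f)"
  proof (cases "g - f = 0")
    case True then show ?thesis by (simp add: linear_0[OF bounded_linear.linear[OF phil]])
  next
    case False then show ?thesis using phip fg unfolding strictly_positive_def
      by (metis diff_ge_0_iff_ge less_eq_real_def)
  qed
  ultimately show ?thesis by simp
qed

lemma phi_nonneg: "0 \<le> f \<Longrightarrow> 0 \<le> \<phi> f"
  using phi_mono[of 0 f] by (simp add: linear_0[OF bounded_linear.linear[OF phil]])

definition good :: "('a \<Rightarrow> 'a) \<Rightarrow> bool" where
  "good T \<longleftrightarrow> (\<exists>K\<ge>0. \<forall>f\<ge>0. bnd u (T f) (K * \<phi> f))"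

lemma good_add: "good T \<Longrightarrow> good S \<Longrightarrow> good (\<lambda>y. T y + S y)"
  unfolding good_def
proof (elim exE conjE)
  fix K L assume K: "K \<ge> 0" "\<forall>f\<ge>0. bnd u (T f) (K * \<phi> f)" and L: "L \<ge> 0" "\<forall>f\<ge>0. bnd u (S f) (L * \<phi> f)"
  show "\<exists>M\<ge>0. \<forall>f\<ge>0. bnd u (T f + S f) (M * \<phi> f)"
    by (rule exI[of _ "K + L"]) (use K L in \<open>auto simp: distrib_right intro!: bnd_add\<close>)
qed

lemma good_scale: "good T \<Longrightarrow> good (\<lambda>y. c *\<^sub>R T y)"
  unfolding good_def
proof (elim exE conjE)
  fix K assume K: "K \<ge> 0" "\<forall>f\<ge>0. bnd u (T f) (K * \<phi> f)"
  show "\<exists>M\<ge>0. \<forall>f\<ge>0. bnd u (c *\<^sub>R T f) (M * \<phi> f)"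
    by (rule exI[of _ "\<bar>c\<bar> * K"]) (use K in \<open>auto simp: mult.assoc intro!: bnd_scale\<close>)
qed

lemma good_comp:
  assumes l1: "bounded_linear T1" and g1: "good T1" and g2: "good T2"
  shows "good (\<lambda>f. T1 (T2 f))"
proof -
  obtain K1 where K1: "K1 \<ge> 0" "\<And>f. f \<ge> 0 \<Longrightarrow> bnd u (T1 f) (K1 * \<phi> f)" using g1 unfolding good_def by blast
  obtain K2 where K2: "K2 \<ge> 0" "\<And>f. f \<ge> 0 \<Longrightarrow> bnd u (T2 f) (K2 * \<phi> f)" using g2 unfolding good_def by blast
  have pu: "0 \<le> \<phi> u" using phi_nonneg u .
  show ?thesis unfolding good_def
  proof (intro exI[of _ "3 * K1 * K2 * \<phi> u"] conjI allI impI)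
    show "0 \<le> 3 * K1 * K2 * \<phi> u" using K1 K2 pu by simp
    fix f :: 'a assume f: "0 \<le> f"
    have pf: "0 \<le> \<phi> f" using phi_nonneg f .
    let ?g = "T2 f" and ?t = "K2 * \<phi> f"
    have bg: "bnd u ?g ?t" using K2 f by blast
    let ?g1 = "?g + ?t *\<^sub>R u"
    have "- (?t *\<^sub>R u) \<le> ?g" using bg unfolding bnd_def by blast
    then have "- (?t *\<^sub>R u) + ?t *\<^sub>R u \<le> ?g + ?t *\<^sub>R u" by (rule add_right_mono)
    then have g1: "0 \<le> ?g1" by simp
    have "\<phi> ?g \<le> \<phi> (?t *\<^sub>R u)" using bg unfolding bnd_def by (intro phi_mono) auto
    then have pg1: "\<phi> ?g1 \<le> 2 * ?t * \<phi> u"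
      by (simp add: linear_add[OF bounded_linear.linear[OF phil]] linear_scale[OF bounded_linear.linear[OF phil]])
    have eq: "T1 ?g = T1 ?g1 + (- ?t) *\<^sub>R T1 u"
      by (simp add: linear_add[OF bounded_linear.linear[OF l1]] linear_scale[OF bounded_linear.linear[OF l1]])
    have b1: "bnd u (T1 ?g1) (K1 * (2 * ?t * \<phi> u))"
      using K1(2)[OF g1] by (rule bnd_mono[OF u, rotated]) (use pg1 K1 in \<open>simp add: mult_left_mono\<close>)
    have b2: "bnd u ((- ?t) *\<^sub>R T1 u) (\<bar>- ?t\<bar> * (K1 * \<phi> u))"
      using K1(2)[OF u] by (rule bnd_scale)
    have X: "bnd u (T1 ?g) (K1 * (2 * ?t * \<phi> u) + \<bar>- ?t\<bar> * (K1 * \<phi> u))"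
      unfolding eq by (rule bnd_add[OF b1 b2])
    have ab: "\<bar>- ?t\<bar> = ?t" using K2(1) pf by simp
    have e: "K1 * (2 * ?t * \<phi> u) + \<bar>- ?t\<bar> * (K1 * \<phi> u) = 3 * K1 * K2 * \<phi> u * \<phi> f"
      unfolding ab by (simp add: algebra_simps)
    show "bnd u (T1 (T2 f)) (3 * K1 * K2 * \<phi> u * \<phi> f)" using X unfolding e by assumption
  qed
qed

lemma decomp: "(h::'a) = sup h 0 - sup (- h) 0"
proof -
  have "h = pprt h + nprt h" by (rule prts)
  also have "nprt h = - pprt (- h)" by (simp add: pprt_neg)
  finally show ?thesis by (simp add: pprt_def)
qed

lemma good_sandwich:
  assumes l0: "bounded_linear R0" and g0: "good R0" and lb: "bounded_linear B"
  shows "good (\<lambda>y. R0 (B (R0 y)))"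
proof -
  obtain K where K: "K \<ge> 0" "\<And>f. f \<ge> 0 \<Longrightarrow> bnd u (R0 f) (K * \<phi> f)" using g0 unfolding good_def by blast
  obtain nb where nb: "nb > 0" "\<And>x. norm (B x) \<le> norm x * nb" using bounded_linear.pos_bounded[OF lb] by blast
  obtain np where np: "np > 0" "\<And>x. norm (\<phi> x) \<le> norm x * np" using bounded_linear.pos_bounded[OF phil] by blast
  have lin0: "linear R0" using l0 by (rule bounded_linear.linear)
  have key: "bnd u (R0 h) (K * (2 * np * norm h))" for h
  proof -
    let ?p = "sup h 0" and ?q = "sup (- h) 0"
    have s0: "0 \<le> sup h (- h)" by (rule abs_nonneg_lat)
    have p0: "0 \<le> ?p" and q0: "0 \<le> ?q" by simp_all
    have "?p \<le> sup h (- h)" using s0 by (simp add: le_supI1)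
    then have np_: "norm ?p \<le> norm h" by (rule pos_norm_le[OF p0])
    have "?q \<le> sup h (- h)" using s0 by (simp add: le_supI2)
    then have nq_: "norm ?q \<le> norm h" by (rule pos_norm_le[OF q0])
    have fp: "\<phi> ?p \<le> np * norm h"
    proof -
      have "\<phi> ?p \<le> norm (\<phi> ?p)" by simp
      also have "\<dots> \<le> norm ?p * np" by (rule np(2))
      also have "\<dots> \<le> norm h * np" using np_ np(1) by (simp add: mult_right_mono)
      finally show ?thesis by (simp add: mult.commute)
    qed
    have fq: "\<phi> ?q \<le> np * norm h"
    proof -
      have "\<phi> ?q \<le> norm (\<phi> ?q)" by simp
      also have "\<dots> \<le> norm ?q * np" by (rule np(2))
      also have "\<dots> \<le> norm h * np" using nq_ np(1) by (simp add: mult_right_mono)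
      finally show ?thesis by (simp add: mult.commute)
    qed
    have bp: "bnd u (R0 ?p) (K * (np * norm h))"
      using K(2)[OF p0] by (rule bnd_mono[OF u, rotated]) (use fp K(1) in \<open>simp add: mult_left_mono\<close>)
    have bq: "bnd u (R0 ?q) (K * (np * norm h))"
      using K(2)[OF q0] by (rule bnd_mono[OF u, rotated]) (use fq K(1) in \<open>simp add: mult_left_mono\<close>)
    have bq': "bnd u ((-1::real) *\<^sub>R R0 ?q) (\<bar>-1::real\<bar> * (K * (np * norm h)))"
      using bq by (rule bnd_scale)
    have eq: "R0 h = R0 ?p + (-1::real) *\<^sub>R R0 ?q"
    proof -
      have "R0 h = R0 (?p - ?q)" using decomp[of h] by (rule arg_cong)
      also have "\<dots> = R0 ?p - R0 ?q" by (rule linear_diff[OF lin0])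
      finally show ?thesis by simp
    qed
    have "bnd u (R0 h) (K * (np * norm h) + \<bar>-1::real\<bar> * (K * (np * norm h)))"
      unfolding eq by (rule bnd_add[OF bp bq'])
    moreover have "K * (np * norm h) + \<bar>-1::real\<bar> * (K * (np * norm h)) = K * (2 * np * norm h)" by simp
    ultimately show ?thesis by metis
  qed
  show ?thesis unfolding good_def
  proof (intro exI[of _ "K * (2 * np * (nb * (K * norm u)))"] conjI allI impI)
    show "0 \<le> K * (2 * np * (nb * (K * norm u)))" using K(1) np(1) nb(1) by simp
    fix f :: 'a assume f: "0 \<le> f"
    have pf: "0 \<le> \<phi> f" using phi_nonneg f .
    have ng: "norm (R0 f) \<le> K * \<phi> f * norm u" using K(2)[OF f] by (intro bnd_norm) (use K(1) pf in simp)
    have nh: "norm (B (R0 f)) \<le> nb * (K * \<phi> f * norm u)"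
    proof -
      have "norm (B (R0 f)) \<le> norm (R0 f) * nb" by (rule nb(2))
      also have "\<dots> \<le> (K * \<phi> f * norm u) * nb" using ng nb(1) by (simp add: mult_right_mono)
      finally show ?thesis by (simp add: mult.commute)
    qed
    have "K * (2 * np * norm (B (R0 f))) \<le> K * (2 * np * (nb * (K * \<phi> f * norm u)))"
      using nh K(1) np(1) by (simp add: mult_left_mono)
    also have "\<dots> = K * (2 * np * (nb * (K * norm u))) * \<phi> f" by (simp add: algebra_simps)
    finally show "bnd u (R0 (B (R0 f))) (K * (2 * np * (nb * (K * norm u))) * \<phi> f)"
      by (rule bnd_mono[OF u _ key])
  qed
qed

lemma good_funpow:
  assumes l: "bounded_linear T" and g: "good T"
  shows "n \<ge> 1 \<Longrightarrow> good (T ^^ n)"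
proof (induction n)
  case 0 then show ?case by simp
next
  case (Suc m)
  show ?case
  proof (cases "m = 0")
    case True then show ?thesis using g by simp
  next
    case False
    then have "good (T ^^ m)" using Suc.IH by simp
    then have "good (\<lambda>f. T ((T ^^ m) f))" by (rule good_comp[OF l g])
    moreover have "(T ^^ Suc m) = (\<lambda>f. T ((T ^^ m) f))" by (simp add: o_def)
    ultimately show ?thesis by simp
  qed
qed

lemma good_dom:
  assumes "good T"
  shows "dominates T (\<lambda>f. - rank_one u \<phi> f) \<and> dominates (rank_one u \<phi>) T"
proof -
  obtain K where K: "K \<ge> 0" "\<And>f. f \<ge> 0 \<Longrightarrow> bnd u (T f) (K * \<phi> f)" using assms unfolding good_def by blast
  have A: "dominates T (\<lambda>f. - rank_one u \<phi> f)" unfolding dominates_def rank_one_def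
  proof (intro exI[of _ "K + 1"] conjI allI impI)
    show "(0::real) < K + 1" using K(1) by simp
    fix f :: 'a assume f: "0 \<le> f"
    have pf: "0 \<le> \<phi> f" using phi_nonneg f .
    have "- ((K * \<phi> f) *\<^sub>R u) \<le> T f" using K(2)[OF f] unfolding bnd_def by blast
    moreover have "(K * \<phi> f) *\<^sub>R u \<le> ((K + 1) * \<phi> f) *\<^sub>R u"
      using pf u by (intro scaleR_right_mono) (auto simp: mult_right_mono)
    ultimately have "- (((K + 1) * \<phi> f) *\<^sub>R u) \<le> T f" by (meson neg_le_iff_le order_trans)
    then have "0 \<le> T f + ((K + 1) * \<phi> f) *\<^sub>R u" by (simp add: minus_le_iff add.commute)
      (metis add.commute neg_le_iff_le le_add_diff_inverse2 diff_ge_0_iff_ge diff_minus_eq_add)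
    then show "0 \<le> T f - (K + 1) *\<^sub>R - (\<phi> f *\<^sub>R u)" by (simp add: scaleR_scaleR)
  qed
  have B: "dominates (rank_one u \<phi>) T" unfolding dominates_def rank_one_def
  proof (intro exI[of _ "1 / (K + 1)"] conjI allI impI)
    show "(0::real) < 1 / (K + 1)" using K(1) by simp
    fix f :: 'a assume f: "0 \<le> f"
    have pf: "0 \<le> \<phi> f" using phi_nonneg f .
    have "T f \<le> (K * \<phi> f) *\<^sub>R u" using K(2)[OF f] unfolding bnd_def by blast
    then have "(1 / (K + 1)) *\<^sub>R T f \<le> (1 / (K + 1)) *\<^sub>R ((K * \<phi> f) *\<^sub>R u)"
      using K(1) by (intro scaleR_left_mono) auto
    also have "\<dots> = (K / (K + 1) * \<phi> f) *\<^sub>R u" by simp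
    also have "\<dots> \<le> \<phi> f *\<^sub>R u"
    proof (intro scaleR_right_mono u)
      have "K / (K + 1) \<le> 1" using K(1) by simp
      then have "K / (K + 1) * \<phi> f \<le> 1 * \<phi> f" using pf by (rule mult_right_mono)
      then show "K / (K + 1) * \<phi> f \<le> \<phi> f" by simp
    qed
    finally show "0 \<le> \<phi> f *\<^sub>R u - (1 / (K + 1)) *\<^sub>R T f" by simp
  qed
  show ?thesis using A B by blast
qed

lemma dom_good:
  assumes d1: "dominates T (\<lambda>f. - rank_one u \<phi> f)" and d2: "dominates (rank_one u \<phi>) T"
  shows "good T"
proof -
  obtain c1 where c1: "c1 > 0" "\<And>f. 0 \<le> f \<Longrightarrow> 0 \<le> T f - c1 *\<^sub>R - (\<phi> f *\<^sub>R u)"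
    using d1 unfolding dominates_def rank_one_def by blast
  obtain c2 where c2: "c2 > 0" "\<And>f. 0 \<le> f \<Longrightarrow> 0 \<le> \<phi> f *\<^sub>R u - c2 *\<^sub>R T f"
    using d2 unfolding dominates_def rank_one_def by blast
  let ?K = "max c1 (1 / c2)"
  show ?thesis unfolding good_def
  proof (intro exI[of _ ?K] conjI allI impI)
    show "0 \<le> ?K" using c1 by simp
    fix f :: 'a assume f: "0 \<le> f"
    have pf: "0 \<le> \<phi> f" using phi_nonneg f .
    have "0 \<le> T f + (c1 * \<phi> f) *\<^sub>R u" using c2(1) c1(2)[OF f] by simp
    then have lo: "- ((c1 * \<phi> f) *\<^sub>R u) \<le> T f" by (simp add: minus_le_iff add.commute)
      (metis add.commute neg_le_iff_le le_add_diff_inverse2 diff_ge_0_iff_ge diff_minus_eq_add)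
    have "c2 *\<^sub>R T f \<le> \<phi> f *\<^sub>R u" using c2(2)[OF f] by simp
    then have "(1 / c2) *\<^sub>R (c2 *\<^sub>R T f) \<le> (1 / c2) *\<^sub>R (\<phi> f *\<^sub>R u)"
      using c2(1) by (intro scaleR_left_mono) auto
    then have hi: "T f \<le> ((1 / c2) * \<phi> f) *\<^sub>R u" using c2(1) by simp
    have m1: "(c1 * \<phi> f) *\<^sub>R u \<le> (?K * \<phi> f) *\<^sub>R u"
      using pf u by (intro scaleR_right_mono) (auto simp: mult_right_mono)
    have "1 / c2 \<le> ?K" by simp
    then have "(1 / c2) * \<phi> f \<le> ?K * \<phi> f" using pf by (rule mult_right_mono)
    then have m2: "((1 / c2) * \<phi> f) *\<^sub>R u \<le> (?K * \<phi> f) *\<^sub>R u"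
      using u by (rule scaleR_right_mono)
    show "bnd u (T f) (?K * \<phi> f)" unfolding bnd_def
      using lo hi m1 m2 by (meson neg_le_iff_le order_trans)
  qed
qed

end

theorem proposition4p1:
  fixes D :: "'a::real_banach_lattice set" and A :: "'a \<Rightarrow> 'a"
    and u :: 'a and \<phi> :: "'a \<Rightarrow> real" and \<mu>\<^sub>0 :: real
  assumes "lin_op D A" and "densely_defined D" and "closed_op D A"
    and "0 \<le> u"
    and "bounded_linear \<phi>" and "strictly_positive \<phi>"
    and "in_resolvent_set D A \<mu>\<^sub>0"
    and "dominates (resolvent D A \<mu>\<^sub>0) (\<lambda>f. - rank_one u \<phi> f)"
    and "dominates (rank_one u \<phi>) (resolvent D A \<mu>\<^sub>0)"
  shows "\<forall>\<mu> n. in_resolvent_set D A \<mu> \<and> n \<ge> 1 \<longrightarrow>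
           dominates (resolvent D A \<mu> ^^ n) (\<lambda>f. - rank_one u \<phi> f) \<and>
           dominates (rank_one u \<phi>) (resolvent D A \<mu> ^^ n)"
proof (intro allI impI)
  fix \<mu> :: real and n :: nat
  assume h: "in_resolvent_set D A \<mu> \<and> n \<ge> 1"
  then have r: "in_resolvent_set D A \<mu>" and n: "n \<ge> 1" by auto
  have r0: "in_resolvent_set D A \<mu>\<^sub>0" by (rule assms(7))
  interpret P: posctx u \<phi> by (rule posctx.intro[OF assms(4,5,6)])
  let ?Q = "resolvent D A \<mu>\<^sub>0" and ?R = "resolvent D A \<mu>" and ?d = "\<mu>\<^sub>0 - \<mu>"
  have l0: "bounded_linear ?Q" using r0 unfolding in_resolvent_set_def by blast
  have l: "bounded_linear ?R" using r unfolding in_resolvent_set_def by blast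
  have g0: "P.good ?Q" using assms(8,9) by (rule P.dom_good)
  have "P.good (\<lambda>y. (?Q y + ?d *\<^sub>R ?Q (?Q y)) + (?d * ?d) *\<^sub>R ?Q (?R (?Q y)))"
  proof (intro P.good_add P.good_scale)
    show "P.good ?Q" by (rule g0)
    show "P.good (\<lambda>y. ?Q (?Q y))" by (rule P.good_comp[OF l0 g0 g0])
    show "P.good (\<lambda>y. ?Q (?R (?Q y)))" by (rule P.good_sandwich[OF l0 g0 l])
  qed
  moreover have "(\<lambda>y. (?Q y + ?d *\<^sub>R ?Q (?Q y)) + (?d * ?d) *\<^sub>R ?Q (?R (?Q y))) = ?R"
    by (rule ext) (rule res_id3[OF r0 r, symmetric])
  ultimately have g: "P.good ?R" by simp
  have "P.good (?R ^^ n)" by (rule P.good_funpow[OF l g n])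
  then show "dominates (?R ^^ n) (\<lambda>f. - rank_one u \<phi> f) \<and> dominates (rank_one u \<phi>) (?R ^^ n)"
    by (rule P.good_dom)
qed

end
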